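(* Let $\mathcal{G}$ be a locally finite one-ended Borel graph on a standard Borel space $X$, and let $\mathcal{F}\subseteq\mathcal{R}_{\mathcal{G}}$ be a finite Borel equivalence relation each of whose classes induces a connected subgraph of $\mathcal{G}$. Let $Q\subseteq\mathcal{F}$ be a Borel set (of pairs, regarded as edges) such that every $\mathcal{F}$-class still induces a connected subgraph of $\mathcal{G}\setminus Q$. Then $\mathcal{G}\setminus Q$ is one-ended.
   Context: A Borel graph is a symmetric Borel set $\mathcal G\subseteq X^2$; it is one-ended if every connected component is one-ended, i.e. removing any finite set of vertices from it leaves exactly one infinite connected component. $\mathcal R_{\mathcal G}$ is the connectedness relation of $\mathcal G$. A finite Borel equivalence relation is a Borel equivalence relation with finite classes. *)

theory Defs
  imports "HOL-Analysis.Analysis"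
begin

definition borel_graph :: "('a::topological_space \<times> 'a) set \<Rightarrow> bool" where
  "borel_graph G \<longleftrightarrow> sym G \<and> G \<in> sets borel"

definition locally_finite_graph :: "('a \<times> 'a) set \<Rightarrow> bool" where
  "locally_finite_graph G \<longleftrightarrow> (\<forall>x. finite (G `` {x}))"

definition conn_rel :: "('a \<times> 'a) set \<Rightarrow> ('a \<times> 'a) set" where
  "conn_rel G = G\<^sup>*"

definition induced :: "('a \<times> 'a) set \<Rightarrow> 'a set \<Rightarrow> ('a \<times> 'a) set" where
  "induced G V = G \<inter> (V \<times> V)"

definition induces_connected :: "('a \<times> 'a) set \<Rightarrow> 'a set \<Rightarrow> bool" where
  "induces_connected G V \<longleftrightarrow> (\<forall>x\<in>V. \<forall>y\<in>V. (x, y) \<in> (induced G V)\<^sup>*)"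

definition components_on :: "('a \<times> 'a) set \<Rightarrow> 'a set \<Rightarrow> 'a set set" where
  "components_on G V = {(induced G V)\<^sup>* `` {x} | x. x \<in> V}"

definition one_ended_component :: "('a \<times> 'a) set \<Rightarrow> 'a set \<Rightarrow> bool" where
  "one_ended_component G C \<longleftrightarrow>
     (\<forall>S. finite S \<longrightarrow> (\<exists>!D. D \<in> components_on G (C - S) \<and> infinite D))"

definition one_ended :: "('a \<times> 'a) set \<Rightarrow> bool" where
  "one_ended G \<longleftrightarrow> (\<forall>x. one_ended_component G (conn_rel G `` {x}))"

definition finite_borel_equiv :: "('a::topological_space \<times> 'a) set \<Rightarrow> bool" where
  "finite_borel_equiv F \<longleftrightarrow> equiv UNIV F \<and> F \<in> sets borel \<and> (\<forall>x. finite (F `` {x}))"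

definition remove_edges :: "('a \<times> 'a) set \<Rightarrow> ('a \<times> 'a) set \<Rightarrow> ('a \<times> 'a) set" where
  "remove_edges G Q = G - (Q \<union> Q\<inverse>)"

end

theory Submission
  imports Defs
begin

lemma ind_sym: "sym R \<Longrightarrow> sym (induced R V)"
  unfolding sym_def induced_def by auto

lemma comp_eq:
  assumes "sym R" "(a,b) \<in> (induced R V)\<^sup>*"
  shows "(induced R V)\<^sup>* `` {a} = (induced R V)\<^sup>* `` {b}"
proof -
  let ?T = "(induced R V)\<^sup>*"
  have s: "sym ?T" using assms(1) ind_sym sym_rtrancl by blast
  have "(b,a) \<in> ?T" using s assms(2) by (meson symD)
  then show ?thesis using assms(2) by (auto intro: rtrancl_trans)
qed

lemma comp_in:
  assumes "sym R" "D \<in> components_on R V" "x \<in> D"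
  shows "D = (induced R V)\<^sup>* `` {x}"
proof -
  obtain z where "D = (induced R V)\<^sup>* `` {z}" using assms(2) unfolding components_on_def by blast
  then show ?thesis using assms comp_eq by fastforce
qed

lemma ind_mono: "R \<subseteq> R' \<Longrightarrow> V \<subseteq> W \<Longrightarrow> (induced R V)\<^sup>* \<subseteq> (induced R' W)\<^sup>*"
  by (rule rtrancl_mono) (auto simp: induced_def)

lemma ind_sub: "(a,b) \<in> (induced R V)\<^sup>* \<Longrightarrow> a \<in> V \<Longrightarrow> b \<in> V"
  by (induction rule: rtrancl_induct) (auto simp: induced_def)

lemma comp_sub: "D \<in> components_on R V \<Longrightarrow> D \<subseteq> V"
  unfolding components_on_def using ind_sub by fastforce

lemma leave: "(c,e) \<in> R\<^sup>* \<Longrightarrow> c \<in> K \<Longrightarrow> e \<notin> K \<Longrightarrow> \<exists>a b. a \<in> K \<and> b \<notin> K \<and> (a,b) \<in> R"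
  by (induction rule: rtrancl_induct) auto

theorem proposition3p9:
  fixes G F Q :: "('a::polish_space \<times> 'a) set"
  assumes "borel_graph G"
    and "locally_finite_graph G"
    and "one_ended G"
    and "finite_borel_equiv F"
    and "F \<subseteq> conn_rel G"
    and "\<forall>x. induces_connected G (F `` {x})"
    and "Q \<subseteq> F"
    and "Q \<in> sets borel"
    and "\<forall>x. induces_connected (remove_edges G Q) (F `` {x})"
  shows "one_ended (remove_edges G Q)"
proof -
  define H where "H = remove_edges G Q"
  have symG: "sym G" using assms(1) unfolding borel_graph_def by blast
  have eqF: "equiv UNIV F" and finF: "\<And>x. finite (F `` {x})"
    using assms(4) unfolding finite_borel_equiv_def by auto
  have symF: "sym F" and transF: "trans F" and reflF: "\<And>x. (x,x) \<in> F"
    using eqF unfolding equiv_def refl_on_def by auto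
  have HG: "H \<subseteq> G" unfolding H_def remove_edges_def by blast
  have symH: "sym H" using symG unfolding H_def remove_edges_def sym_def by blast
  have missing: "b \<in> F `` {a}" if "(a,b) \<in> G" "(a,b) \<notin> H" for a b
    using that assms(7) symF unfolding H_def remove_edges_def by (auto dest: symD)
  have Fconn: "(a,b) \<in> (induced H (F `` {a}))\<^sup>*" if "b \<in> F `` {a}" for a b
    using assms(9) that reflF unfolding H_def induces_connected_def by blast
  have Fcls: "F `` {a} \<subseteq> G\<^sup>* `` {a}" for a
    using assms(5) unfolding conn_rel_def by blast
  have GH: "G \<subseteq> H\<^sup>*"
  proof
    fix p assume p: "p \<in> G"
    obtain a b where ab: "p = (a,b)" by fastforce
    show "p \<in> H\<^sup>*"
    proof (cases "(a,b) \<in> H")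
      case False
      then have "(a,b) \<in> (induced H (F `` {a}))\<^sup>*" using Fconn missing p ab by blast
      moreover have "(induced H (F `` {a}))\<^sup>* \<subseteq> H\<^sup>*"
        by (rule rtrancl_mono) (auto simp: induced_def)
      ultimately show ?thesis using ab by blast
    qed (use ab in auto)
  qed
  have connEq: "G\<^sup>* = H\<^sup>*" using rtrancl_subset[OF HG GH] by simp
  show ?thesis unfolding H_def[symmetric] one_ended_def one_ended_component_def conn_rel_def
  proof (intro allI impI)
    fix x :: 'a and S :: "'a set"
    assume finS: "finite S"
    define C where "C = G\<^sup>* `` {x}"
    have CH: "H\<^sup>* `` {x} = C" unfolding C_def connEq ..
    have Cclosed: "b \<in> C" if "a \<in> C" "(a,b) \<in> G\<^sup>*" for a b
      using that unfolding C_def by (auto intro: rtrancl_trans)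
    have Cconn: "(a,b) \<in> G\<^sup>*" if "a \<in> C" "b \<in> C" for a b
    proof -
      have "(a,x) \<in> G\<^sup>*" using that(1) symG sym_rtrancl unfolding C_def by (blast dest: symD)
      then show ?thesis using that(2) unfolding C_def by (auto intro: rtrancl_trans)
    qed
    define S' where "S' = F `` S"
    have finS': "finite S'" unfolding S'_def
    proof -
      have "F `` S = (\<Union>s\<in>S. F `` {s})" by blast
      then show "finite (F `` S)" using finS finF by simp
    qed
    have SS': "S \<subseteq> S'" unfolding S'_def using reflF by blast
    have S'cl: "F `` {a} \<inter> S' = {}" if "a \<notin> S'" for a
      using that symF transF unfolding S'_def by (auto dest: symD transD)
    have Fsub: "F `` {a} \<subseteq> C - S'" if "a \<in> C - S'" for a
      using that Fcls Cclosed S'cl by blast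
    obtain E where Ecomp: "E \<in> components_on G (C - S')" and Einf: "infinite E"
      and Euniq: "\<And>D. D \<in> components_on G (C - S') \<Longrightarrow> infinite D \<Longrightarrow> D = E"
      using assms(3) finS' unfolding one_ended_def one_ended_component_def conn_rel_def C_def
      by metis
    obtain e where eV: "e \<in> C - S'" and Edef: "E = (induced G (C - S'))\<^sup>* `` {e}"
      using Ecomp unfolding components_on_def by blast
    have K: "(u,v) \<in> (induced H (C - S))\<^sup>*" if "(u,v) \<in> (induced G (C - S'))\<^sup>*" for u v
      using that
    proof (induction rule: rtrancl_induct)
      case base then show ?case by simp
    next
      case (step a b)
      have ab: "a \<in> C - S'" "b \<in> C - S'" "(a,b) \<in> G" using step(2) unfolding induced_def by auto
      have "(a,b) \<in> (induced H (C - S))\<^sup>*"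
      proof (cases "(a,b) \<in> H")
        case True
        then have "(a,b) \<in> induced H (C - S)" using ab SS' unfolding induced_def by auto
        then show ?thesis by blast
      next
        case False
        then have "(a,b) \<in> (induced H (F `` {a}))\<^sup>*" using Fconn missing ab by blast
        moreover have "(induced H (F `` {a}))\<^sup>* \<subseteq> (induced H (C - S))\<^sup>*"
          using ind_mono[of H H "F `` {a}" "C - S"] Fsub[OF ab(1)] SS' by blast
        ultimately show ?thesis by blast
      qed
      then show ?case using step(3) by (auto intro: rtrancl_trans)
    qed
    define D0 where "D0 = (induced H (C - S))\<^sup>* `` {e}"
    have D0comp: "D0 \<in> components_on H (C - S)"
      unfolding D0_def components_on_def using eV SS' by blast
    have ED0: "E \<subseteq> D0" unfolding Edef D0_def using K by blast
    have D0inf: "infinite D0" using ED0 Einf finite_subset by blast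
    define N where "N = G `` S'"
    have finN: "finite N"
    proof -
      have "N = (\<Union>s\<in>S'. G `` {s})" unfolding N_def by blast
      then show ?thesis using finS' assms(2) unfolding locally_finite_graph_def by simp
    qed
    let ?cG = "\<lambda>a. (induced G (C - S'))\<^sup>* `` {a}"
    have finK: "\<exists>a\<in>N. K = ?cG a \<and> finite (?cG a)"
      if Kc: "K \<in> components_on G (C - S')" and Kf: "finite K" for K
    proof -
      obtain c where cV: "c \<in> C - S'" and Kd: "K = ?cG c"
        using Kc unfolding components_on_def by blast
      have cK: "c \<in> K" using Kd by blast
      have eK: "e \<notin> K"
      proof
        assume "e \<in> K"
        then have "K = E" using comp_in[OF symG Kc] Edef by simp
        then show False using Kf Einf by simp
      qed
      have "(c,e) \<in> G\<^sup>*" using Cconn cV eV by blast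
      then obtain a b where a: "a \<in> K" and b: "b \<notin> K" and abG: "(a,b) \<in> G"
        using leave cK eK by metis
      have aV: "a \<in> C - S'" using a Kc comp_sub by blast
      have bC: "b \<in> C" using Cclosed aV abG by blast
      have KA: "K = ?cG a" using comp_in[OF symG Kc a] .
      have bS: "b \<in> S'"
      proof (rule ccontr)
        assume "b \<notin> S'"
        then have "(a,b) \<in> induced G (C - S')" using aV bC abG unfolding induced_def by auto
        then have "b \<in> K" using KA by blast
        then show False using b by simp
      qed
      have "a \<in> N" unfolding N_def using bS abG symG by (blast dest: symD)
      then show ?thesis using KA Kf by blast
    qed
    define Fin where "Fin = \<Union>(?cG ` {a\<in>N. finite (?cG a)})"
    have finFin: "finite Fin" unfolding Fin_def using finN by auto
    have cover: "C - S' \<subseteq> E \<union> Fin"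
    proof
      fix c assume cV: "c \<in> C - S'"
      have cc: "?cG c \<in> components_on G (C - S')" unfolding components_on_def using cV by blast
      show "c \<in> E \<union> Fin"
      proof (cases "finite (?cG c)")
        case True
        then obtain a where "a \<in> N" "?cG c = ?cG a" "finite (?cG a)" using finK[OF cc] by blast
        then show ?thesis unfolding Fin_def by blast
      next
        case False
        then show ?thesis using Euniq[OF cc] by blast
      qed
    qed
    have meetE: "D = D0" if Dc: "D \<in> components_on H (C - S)" and Di: "infinite D" for D
    proof -
      have "D \<inter> E \<noteq> {}"
      proof
        assume "D \<inter> E = {}"
        moreover have "D \<subseteq> C" using comp_sub[OF Dc] by blast
        ultimately have "D \<subseteq> S' \<union> Fin" using cover by blast
        then show False using Di finS' finFin finite_subset by blast
      qed
      then obtain y where yD: "y \<in> D" and yE: "y \<in> E" by blast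
      have "(e,y) \<in> (induced H (C - S))\<^sup>*" using yE K unfolding Edef by blast
      then have "D0 = (induced H (C - S))\<^sup>* `` {y}" unfolding D0_def using comp_eq[OF symH] by blast
      then show ?thesis using comp_in[OF symH Dc yD] by simp
    qed
    show "\<exists>!D. D \<in> components_on H (H\<^sup>* `` {x} - S) \<and> infinite D"
      unfolding CH using D0comp D0inf meetE by blast
  qed
qed

end
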